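(* Let $n\ge 1$ be an integer and $R=\mathbb{Z}_2\times\cdots\times\mathbb{Z}_2$ ($n$ factors). Then $\Gamma'(R)$ is perfect; equivalently, neither $\Gamma'(R)$ nor its complement $\overline{\Gamma'(R)}$ contains an induced cycle of odd length at least $5$.
   Context: All rings are commutative with identity. $W^*(R)$ denotes the set of non-zero non-unit elements of $R$. The cozero-divisor graph $\Gamma'(R)$ is the simple graph with vertex set $W^*(R)$, in which distinct $a,b$ are adjacent iff $a\notin Rb$ and $b\notin Ra$. A graph $G$ is perfect if every induced subgraph $H$ satisfies $\omega(H)=\chi(H)$ (clique number equals chromatic number). *)

theory Defs
  imports Main "HOL-Library.Function_Algebras" "HOL-Library.Z2"
begin

text \<open>The ring Z_2 x ... x Z_2 (n factors) is modelled as the type 'n => bit for a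
finite index type 'n with CARD('n) = n (pointwise ring operations from Function_Algebras,
bit = Z_2 from HOL-Library.Z2).\<close>

definition W_star :: "'a::comm_ring_1 set" where
  "W_star = {a. a \<noteq> 0 \<and> \<not> (a dvd 1)}"

definition principal_ideal :: "'a::comm_ring_1 \<Rightarrow> 'a set" where
  "principal_ideal b = {r * b | r. True}"

definition cozero_adj :: "'a::comm_ring_1 \<Rightarrow> 'a \<Rightarrow> bool" where
  "cozero_adj a b \<longleftrightarrow> a \<in> W_star \<and> b \<in> W_star \<and> a \<noteq> b \<and>
     a \<notin> principal_ideal b \<and> b \<notin> principal_ideal a"

text \<open>Simple graphs given by a vertex set V and a symmetric irreflexive relation E.
Induced subgraph on H is (H, E restricted to H).\<close>
definition is_clique :: "('v \<Rightarrow> 'v \<Rightarrow> bool) \<Rightarrow> 'v set \<Rightarrow> bool" where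
  "is_clique E K \<longleftrightarrow> (\<forall>x\<in>K. \<forall>y\<in>K. x \<noteq> y \<longrightarrow> E x y)"

definition clique_number :: "'v set \<Rightarrow> ('v \<Rightarrow> 'v \<Rightarrow> bool) \<Rightarrow> nat" where
  "clique_number V E = Max {card K | K. K \<subseteq> V \<and> is_clique E K}"

definition proper_colouring :: "'v set \<Rightarrow> ('v \<Rightarrow> 'v \<Rightarrow> bool) \<Rightarrow> ('v \<Rightarrow> nat) \<Rightarrow> nat \<Rightarrow> bool" where
  "proper_colouring V E c k \<longleftrightarrow> c ` V \<subseteq> {..<k} \<and>
     (\<forall>x\<in>V. \<forall>y\<in>V. E x y \<longrightarrow> c x \<noteq> c y)"

definition chromatic_number :: "'v set \<Rightarrow> ('v \<Rightarrow> 'v \<Rightarrow> bool) \<Rightarrow> nat" where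
  "chromatic_number V E = (LEAST k. \<exists>c. proper_colouring V E c k)"

definition perfect_graph :: "'v set \<Rightarrow> ('v \<Rightarrow> 'v \<Rightarrow> bool) \<Rightarrow> bool" where
  "perfect_graph V E \<longleftrightarrow> (\<forall>H \<subseteq> V. clique_number H E = chromatic_number H E)"

end

theory Submission
  imports Defs
begin

definition antich :: "'a::order set \<Rightarrow> bool" where
  "antich A \<longleftrightarrow> (\<forall>x\<in>A. \<forall>y\<in>A. x \<le> y \<longrightarrow> x = y)"

lemma dilworth:
  fixes S :: "'a::order set"
  assumes "finite S" "\<forall>A\<subseteq>S. antich A \<longrightarrow> card A \<le> k"
  shows "\<exists>c. c ` S \<subseteq> {..<k} \<and> (\<forall>x\<in>S. \<forall>y\<in>S. c x = c y \<longrightarrow> x \<le> y \<or> y \<le> x)"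
  using assms
proof (induction "card S" arbitrary: S k rule: less_induct)
  case less
  show ?case
  proof (cases "S = {}")
    case True then show ?thesis by auto
  next
    case False
    obtain a where aS: "a \<in> S" and amax: "\<forall>y\<in>S. a \<le> y \<longrightarrow> a = y"
      using finite_has_maximal[OF less.prems(1) False] by blast
    have "antich {a}" by (simp add: antich_def)
    hence "card {a} \<le> k" using less.prems(2) aS by (meson empty_subsetI insert_subset)
    hence k1: "1 \<le> k" by simp
    define S' where "S' = S - {a}"
    have finS': "finite S'" using less.prems(1) S'_def by simp
    have cardS': "card S' < card S" unfolding S'_def
      by (rule card_Diff1_less[OF less.prems(1) aS])
    show ?thesis
    proof (cases "\<forall>A\<subseteq>S'. antich A \<longrightarrow> card A \<le> k - 1")
      case True
      obtain c' where c': "c' ` S' \<subseteq> {..<k-1}" "\<forall>x\<in>S'. \<forall>y\<in>S'. c' x = c' y \<longrightarrow> x \<le> y \<or> y \<le> x"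
        using less.hyps[OF cardS' finS' True] by blast
      define c where "c x = (if x = a then k - 1 else c' x)" for x
      have "c ` S \<subseteq> {..<k}" using c'(1) k1 by (auto simp: c_def S'_def)
      moreover have "\<forall>x\<in>S. \<forall>y\<in>S. c x = c y \<longrightarrow> x \<le> y \<or> y \<le> x"
      proof (intro ballI impI)
        fix x y assume xy: "x \<in> S" "y \<in> S" "c x = c y"
        have lt: "c' z < k - 1" if "z \<in> S" "z \<noteq> a" for z
          using c'(1) that S'_def by blast
        show "x \<le> y \<or> y \<le> x"
        proof (cases "x = a")
          case True
          then show ?thesis using xy lt[of y] by (cases "y = a") (auto simp: c_def)
        next
          case False
          then show ?thesis using xy lt[of y] lt[of x] c'(2) S'_def
            by (cases "y = a") (auto simp: c_def)
        qed
      qed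
      ultimately show ?thesis by blast
    next
      case False
      then obtain A0 where A0: "A0 \<subseteq> S'" "antich A0" "\<not> card A0 \<le> k - 1" by blast
      have S'S: "S' \<subseteq> S" using S'_def by blast
      have hS': "\<forall>A\<subseteq>S'. antich A \<longrightarrow> card A \<le> k"
      proof (intro allI impI)
        fix A assume "A \<subseteq> S'" "antich A"
        hence "A \<subseteq> S" "antich A" using S'S by auto
        thus "card A \<le> k" using less.prems(2) by blast
      qed
      have "card A0 \<le> k" using hS' A0 by blast
      hence cA0: "card A0 = k" using A0 k1 by linarith
      obtain c where cr: "c ` S' \<subseteq> {..<k}" and cc: "\<forall>x\<in>S'. \<forall>y\<in>S'. c x = c y \<longrightarrow> x \<le> y \<or> y \<le> x"
        using less.hyps[OF cardS' finS' hS'] by blast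
      define good where "good B \<longleftrightarrow> B \<subseteq> S' \<and> antich B \<and> card B = k" for B
      have F1: "\<exists>y\<in>B. c y = i" if "good B" "i < k" for B i
      proof -
        have fB: "finite B" using that(1) finS' good_def finite_subset by blast
        have BS: "B \<subseteq> S'" and Ba: "antich B" using that(1) by (auto simp: good_def)
        have "inj_on c B"
        proof (rule inj_onI)
          fix x y assume xy: "x \<in> B" "y \<in> B" "c x = c y"
          hence "x \<le> y \<or> y \<le> x" using cc BS by blast
          thus "x = y" using Ba xy unfolding antich_def by blast
        qed
        hence "card (c ` B) = k" using card_image[OF \<open>inj_on c B\<close>] that(1) by (simp add: good_def)
        moreover have "c ` B \<subseteq> {..<k}" using cr that(1) good_def by blast
        ultimately have "c ` B = {..<k}" by (simp add: card_subset_eq)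
        hence "i \<in> c ` B" using that(2) by simp
        thus ?thesis by blast
      qed
      have gA0: "good A0" using A0 cA0 good_def by blast
      define X where "X i = {y\<in>S'. c y = i \<and> (\<exists>B. good B \<and> y \<in> B)}" for i
      have exm: "\<exists>m\<in>X i. \<forall>z\<in>X i. z \<le> m" if ik: "i < k" for i
      proof -
        obtain y where y: "y \<in> A0" "c y = i" using F1[OF gA0 ik] by blast
        have "y \<in> X i" unfolding X_def using y A0(1) gA0 by blast
        hence "X i \<noteq> {}" by blast
        moreover have "finite (X i)" using finS' by (simp add: X_def)
        ultimately obtain m where m: "m \<in> X i" "\<forall>b\<in>X i. m \<le> b \<longrightarrow> m = b"
          using finite_has_maximal by blast
        have "\<forall>z\<in>X i. z \<le> m"
        proof
          fix z assume z: "z \<in> X i"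
          hence "z \<le> m \<or> m \<le> z" using cc m(1) by (auto simp: X_def)
          thus "z \<le> m" using m z by auto
        qed
        thus ?thesis using m(1) by blast
      qed
      have "\<forall>i\<in>{..<k}. \<exists>m. m \<in> X i \<and> (\<forall>z\<in>X i. z \<le> m)" using exm by blast
      from bchoice[OF this] obtain x where x: "\<forall>i\<in>{..<k}. x i \<in> X i \<and> (\<forall>z\<in>X i. z \<le> x i)"
        by blast
      have xX: "\<And>i. i < k \<Longrightarrow> x i \<in> X i" using x by blast
      have xmax: "\<And>i z. i < k \<Longrightarrow> z \<in> X i \<Longrightarrow> z \<le> x i" using x by blast
      have xS': "x i \<in> S'" "c (x i) = i" if "i < k" for i using xX[OF that] by (auto simp: X_def)
      have xanti: "i = j" if ijk: "i < k" "j < k" "x i \<le> x j" for i j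
      proof (rule ccontr)
        assume ij: "i \<noteq> j"
        obtain B where B: "good B" "x j \<in> B" using xX[OF ijk(2)] by (auto simp: X_def)
        obtain y where y: "y \<in> B" "c y = i" using F1[OF B(1) ijk(1)] by blast
        have "y \<in> X i" using y B good_def X_def by blast
        hence "y \<le> x j" using xmax[OF ijk(1)] ijk(3) by (meson order_trans)
        hence "y = x j" using B y unfolding good_def antich_def by blast
        thus False using y(2) xS'[OF ijk(2)] ij by simp
      qed
      show ?thesis
      proof (cases "\<exists>i<k. x i \<le> a")
        case False
        define A' where "A' = insert a (x ` {..<k})"
        have aA: "a \<notin> x ` {..<k}" using xS' S'_def by auto
        have injx: "inj_on x {..<k}" unfolding inj_on_def using xanti by (auto)
        have "card A' = k + 1" using aA injx card_image[OF injx] by (simp add: A'_def)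
        moreover have "A' \<subseteq> S" using xS' S'_def aS A'_def by auto
        moreover have "antich A'"
          unfolding antich_def A'_def
        proof (intro ballI impI)
          fix u v assume u: "u \<in> insert a (x ` {..<k})" and v: "v \<in> insert a (x ` {..<k})" and uv: "u \<le> v"
          show "u = v"
          proof -
            { assume "u = a" "v \<noteq> a"
              then obtain j where "j < k" "v = x j" using v by auto
              hence False using amax \<open>u = a\<close> uv xS' S'_def by auto }
            moreover
            { assume "u \<noteq> a" "v = a"
              then obtain j where "j < k" "u = x j" using u by auto
              hence False using False uv \<open>v = a\<close> by auto }
            moreover
            { assume "u \<noteq> a" "v \<noteq> a"
              then obtain i j where "i < k" "j < k" "u = x i" "v = x j" using u v by auto
              hence "u = v" using xanti uv by auto }
            ultimately show ?thesis by blast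
          qed
        qed
        ultimately have "A' \<subseteq> S \<and> antich A' \<and> card A' = k + 1" by blast
        hence "card A' \<le> k" "card A' = k + 1" using less.prems(2) by auto
        thus ?thesis by simp
      next
        case True
        then obtain i where i: "i < k" "x i \<le> a" by blast
        define K where "K = insert a {z\<in>S'. c z = i \<and> z \<le> x i}"
        define T where "T = S - K"
        have "T \<subset> S" using aS T_def K_def by blast
        hence cardT: "card T < card S" using less.prems(1) by (rule psubset_card_mono[rotated])
        have finT: "finite T" using less.prems(1) T_def by simp
        have hT: "\<forall>B\<subseteq>T. antich B \<longrightarrow> card B \<le> k - 1"
        proof (intro allI impI, rule ccontr)
          fix B assume B0: "B \<subseteq> T" "antich B" and B1: "\<not> card B \<le> k - 1"
          have B: "B \<subseteq> T \<and> antich B" "\<not> card B \<le> k - 1" using B0 B1 by auto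
          have "card B \<le> k" using less.prems(2) B T_def by blast
          hence "good B" using B T_def K_def S'_def good_def by auto
          then obtain y where y: "y \<in> B" "c y = i" using F1 i(1) by blast
          have "y \<in> X i" using y \<open>good B\<close> good_def X_def by blast
          hence "y \<le> x i" using xmax i(1) by blast
          hence "y \<in> K" using y \<open>good B\<close> good_def K_def by auto
          thus False using y B T_def by blast
        qed
        obtain c2 where c2: "c2 ` T \<subseteq> {..<k-1}" "\<forall>x\<in>T. \<forall>y\<in>T. c2 x = c2 y \<longrightarrow> x \<le> y \<or> y \<le> x"
          using less.hyps[OF cardT finT hT] by blast
        define d where "d z = (if z \<in> K then k - 1 else c2 z)" for z
        have "d ` S \<subseteq> {..<k}" using c2(1) k1 by (auto simp: d_def T_def)
        moreover have "\<forall>u\<in>S. \<forall>v\<in>S. d u = d v \<longrightarrow> u \<le> v \<or> v \<le> u"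
        proof (intro ballI impI)
          fix u v assume u: "u \<in> S" and v: "v \<in> S" and duv: "d u = d v"
          have Kch: "p \<le> q \<or> q \<le> p" if "p \<in> K" "q \<in> K" for p q
          proof -
            have "z \<le> a" if "z \<in> K" for z using that i(2) K_def by (auto intro: order_trans)
            thus ?thesis using that cc K_def by auto
          qed
          show "u \<le> v \<or> v \<le> u"
          proof (cases "u \<in> K")
            case True
            then show ?thesis
            proof (cases "v \<in> K")
              case True then show ?thesis using Kch \<open>u \<in> K\<close> by blast
            next
              case False
              hence "v \<in> T" using v T_def by blast
              hence "c2 v < k - 1" using c2(1) by blast
              thus ?thesis using duv True False by (simp add: d_def)
            qed
          next
            case False
            hence uT: "u \<in> T" using u T_def by blast
            hence "c2 u < k - 1" using c2(1) by blast
            show ?thesis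
            proof (cases "v \<in> K")
              case True then show ?thesis using duv False \<open>c2 u < k - 1\<close> by (simp add: d_def)
            next
              case vK: False
              hence "v \<in> T" using v T_def by blast
              thus ?thesis using c2(2) uT duv False vK by (simp add: d_def)
            qed
          qed
        qed
        ultimately show ?thesis by blast
      qed
    qed
  qed
qed

definition supp :: "('n \<Rightarrow> bit) \<Rightarrow> 'n set" where
  "supp a = {i. a i = 1}"

lemma bit_cases2: "(x::bit) = 0 \<or> x = 1" by (cases x) auto

lemma supp_inj: "inj supp"
proof (rule injI)
  fix a b :: "'n \<Rightarrow> bit" assume "supp a = supp b"
  hence "\<forall>i. (a i = 1) = (b i = 1)" by (auto simp: supp_def set_eq_iff)
  thus "a = b" by (metis bit_not_one_iff ext)
qed

lemma pi_supp: "(a::'n \<Rightarrow> bit) \<in> principal_ideal b \<longleftrightarrow> supp a \<subseteq> supp b"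
proof
  assume "a \<in> principal_ideal b"
  then obtain r where r: "a = r * b" by (auto simp: principal_ideal_def)
  show "supp a \<subseteq> supp b"
  proof
    fix i assume "i \<in> supp a"
    hence "r i * b i = 1" using r by (simp add: supp_def)
    thus "i \<in> supp b" using bit_cases2[of "b i"] by (auto simp: supp_def)
  qed
next
  assume h: "supp a \<subseteq> supp b"
  have "a = a * b"
  proof
    fix i
    show "a i = (a * b) i"
      using h bit_cases2[of "a i"] bit_cases2[of "b i"] by (auto simp: supp_def)
  qed
  thus "a \<in> principal_ideal b" by (auto simp: principal_ideal_def)
qed

lemma adj_supp:
  assumes "x \<in> W_star" "y \<in> W_star"
  shows "cozero_adj x y \<longleftrightarrow> x \<noteq> y \<and> \<not> supp x \<subseteq> supp y \<and> \<not> supp y \<subseteq> supp x"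
  using assms by (auto simp: cozero_adj_def pi_supp)

theorem theorem3p2:
  shows "perfect_graph (W_star :: ('n::finite \<Rightarrow> bit) set) cozero_adj"
  unfolding perfect_graph_def
proof (intro allI impI)
  fix H :: "('n \<Rightarrow> bit) set" assume HW: "H \<subseteq> W_star"
  have "finite (range (supp :: ('n \<Rightarrow> bit) \<Rightarrow> 'n set))" by simp
  hence "finite (UNIV :: ('n \<Rightarrow> bit) set)" using supp_inj by (rule finite_imageD)
  hence finH: "finite H" by (rule finite_subset[rotated]) simp
  define Cl where "Cl = {card K |K. K \<subseteq> H \<and> is_clique cozero_adj K}"
  have finCl: "finite Cl"
  proof -
    have "Cl \<subseteq> {..card H}" unfolding Cl_def using card_mono[OF finH] by auto
    thus ?thesis using finite_subset by blast
  qed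
  have "0 \<in> Cl" unfolding Cl_def is_clique_def by force
  define k where "k = Max Cl"
  have cn: "clique_number H cozero_adj = k" unfolding k_def Cl_def clique_number_def by simp
  have kbound: "card K \<le> k" if "K \<subseteq> H" "is_clique cozero_adj K" for K
    unfolding k_def using that finCl by (auto simp: Cl_def intro!: Max_ge)
  have "Cl \<noteq> {}" using \<open>0 \<in> Cl\<close> by blast
  hence "k \<in> Cl" unfolding k_def using finCl by (intro Max_in)
  hence "\<exists>K. k = card K \<and> K \<subseteq> H \<and> is_clique cozero_adj K" unfolding Cl_def by simp
  then obtain K0 where K0: "K0 \<subseteq> H" "is_clique cozero_adj K0" "card K0 = k"
    by metis
  have clq: "is_clique cozero_adj K \<longleftrightarrow> antich (supp ` K)" if "K \<subseteq> H" for K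
  proof -
    have W: "\<And>x. x \<in> K \<Longrightarrow> x \<in> W_star" using that HW by blast
    show ?thesis
    proof
      assume cl: "is_clique cozero_adj K"
      show "antich (supp ` K)" unfolding antich_def
      proof (intro ballI impI)
        fix u v assume u: "u \<in> supp ` K" and v: "v \<in> supp ` K" and uv: "u \<subseteq> v"
        from u obtain x where x: "x \<in> K" "u = supp x" by blast
        from v obtain y where y: "y \<in> K" "v = supp y" by blast
        show "u = v"
        proof (cases "x = y")
          case True then show ?thesis using x y by simp
        next
          case False
          hence "cozero_adj x y" using cl x y unfolding is_clique_def by blast
          hence False using adj_supp[OF W[OF x(1)] W[OF y(1)]] uv x y by simp
          then show ?thesis ..
        qed
      qed
    next
      assume an: "antich (supp ` K)"
      show "is_clique cozero_adj K" unfolding is_clique_def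
      proof (intro ballI impI)
        fix x y assume x: "x \<in> K" and y: "y \<in> K" and xy: "x \<noteq> y"
        have "supp x \<noteq> supp y" using xy supp_inj by (auto simp: inj_def)
        hence "\<not> supp x \<subseteq> supp y" "\<not> supp y \<subseteq> supp x"
          using an x y unfolding antich_def by blast+
        thus "cozero_adj x y" using adj_supp[OF W[OF x] W[OF y]] xy by simp
      qed
    qed
  qed
  have "\<forall>A\<subseteq>supp ` H. antich A \<longrightarrow> card A \<le> k"
  proof (intro allI impI)
    fix A assume A0: "A \<subseteq> supp ` H" "antich A"
    hence A: "A \<subseteq> supp ` H \<and> antich A" by blast
    define K where "K = H \<inter> supp -` A"
    have AK: "A = supp ` K" using A K_def by auto
    have "K \<subseteq> H" using K_def by blast
    hence "is_clique cozero_adj K" using clq A AK by blast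
    hence "card K \<le> k" using kbound \<open>K \<subseteq> H\<close> by blast
    moreover have "card A = card K" unfolding AK
      using supp_inj by (meson card_image inj_on_subset subset_UNIV)
    ultimately show "card A \<le> k" by simp
  qed
  then obtain c' where c': "c' ` supp ` H \<subseteq> {..<k}"
     "\<forall>x\<in>supp ` H. \<forall>y\<in>supp ` H. c' x = c' y \<longrightarrow> x \<subseteq> y \<or> y \<subseteq> x"
    using dilworth[of "supp ` H" k] by auto
  have pc: "proper_colouring H cozero_adj (c' \<circ> supp) k"
    unfolding proper_colouring_def
  proof
    show "(c' \<circ> supp) ` H \<subseteq> {..<k}" using c'(1) by (auto simp: image_comp)
    show "\<forall>x\<in>H. \<forall>y\<in>H. cozero_adj x y \<longrightarrow> (c' \<circ> supp) x \<noteq> (c' \<circ> supp) y"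
    proof (intro ballI impI)
      fix x y assume xy: "x \<in> H" "y \<in> H" "cozero_adj x y"
      show "(c' \<circ> supp) x \<noteq> (c' \<circ> supp) y"
        using c'(2) xy adj_supp[of x y] HW by auto
    qed
  qed
  have low: "k \<le> m" if "proper_colouring H cozero_adj c m" for c m
  proof -
    have "inj_on c K0"
      using that K0 unfolding proper_colouring_def is_clique_def inj_on_def by blast
    hence "card K0 = card (c ` K0)" by (simp add: card_image)
    also have "\<dots> \<le> card {..<m}"
      using that K0(1) unfolding proper_colouring_def by (intro card_mono) auto
    finally show ?thesis using K0(3) by simp
  qed
  have "chromatic_number H cozero_adj = k"
    unfolding chromatic_number_def
    by (rule Least_equality) (use pc low in auto)
  thus "clique_number H cozero_adj = chromatic_number H cozero_adj" using cn by simp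
qed

end
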